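(* For every Greene–Kleitman chain $C$ of length $h\ge 5$ in $Q_n$ and any edge $f$ of $C$, there exist $h-1$ pairwise edge-disjoint flipping $4$-cycles, one between $C$ and each of its $h-1$ children, none of which uses the edge $f$.
   Context: $Q_n$ is the hypercube on $\{0,1\}^n$. Let $D$ be the set of bitstrings (including the empty string) with equally many $0$s and $1$s such that every prefix has at least as many $0$s as $1$s. A (Greene–Kleitman) chain of length $h$ is encoded as a string of length $n$ over $\{0,1,*\}$ of the form $u_0*u_1*\cdots*u_{h-1}*u_h$ with all $u_j\in D$; it is the path in $Q_n$ whose vertices are obtained by replacing the $*$s by $i$ ones followed by $h-i$ zeros, $i=0,1,\ldots,h$. A chain $C'$ of length $h-2$ is a child of a chain $C$ of length $h$ if $C'$ is obtained from $C$ by replacing two consecutive $*$s by $0$ and $1$, respectively; a chain of length $h$ has exactly $h-1$ children. A flipping $4$-cycle between two vertex-disjoint paths $P,P'$ is a $4$-cycle in $Q_n$ that shares exactly one edge with each of the two paths. *)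

theory Defs
  imports Main
begin

text \<open>Bits: False = 0, True = 1. Vertices of Q_n are bool lists of length n.\<close>

definition cnt :: "bool \<Rightarrow> bool list \<Rightarrow> nat" where
  "cnt b xs = length (filter (\<lambda>x. x = b) xs)"

definition dyck :: "bool list \<Rightarrow> bool" where
  "dyck xs \<longleftrightarrow> cnt False xs = cnt True xs \<and>
     (\<forall>k \<le> length xs. cnt True (take k xs) \<le> cnt False (take k xs))"

datatype sym = S0 | S1 | SStar

definition of_bit :: "bool \<Rightarrow> sym" where
  "of_bit b = (if b then S1 else S0)"

fun join_star :: "sym list list \<Rightarrow> sym list" where
  "join_star [] = []"
| "join_star [u] = u"
| "join_star (u # us) = u @ SStar # join_star us"

definition is_gk_chain :: "nat \<Rightarrow> nat \<Rightarrow> sym list \<Rightarrow> bool" where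
  "is_gk_chain n h w \<longleftrightarrow> length w = n \<and>
     (\<exists>us. length us = h + 1 \<and> (\<forall>u\<in>set us. dyck u) \<and>
           w = join_star (map (map of_bit) us))"

fun fill :: "nat \<Rightarrow> sym list \<Rightarrow> bool list" where
  "fill i [] = []"
| "fill i (S0 # w) = False # fill i w"
| "fill i (S1 # w) = True # fill i w"
| "fill i (SStar # w) = (0 < i) # fill (i - 1) w"

definition chain_path :: "nat \<Rightarrow> sym list \<Rightarrow> bool list list" where
  "chain_path h w = map (\<lambda>i. fill i w) [0..<h+1]"

fun repl_star :: "nat \<Rightarrow> sym \<Rightarrow> sym list \<Rightarrow> sym list" where
  "repl_star j s [] = []"
| "repl_star j s (SStar # w) =
     (if j = 0 then s # w else SStar # repl_star (j - 1) s w)"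
| "repl_star j s (x # w) = x # repl_star j s w"

definition child :: "nat \<Rightarrow> sym list \<Rightarrow> sym list" where
  "child k w = repl_star k S0 (repl_star (Suc k) S1 w)"

definition hedge :: "nat \<Rightarrow> bool list \<Rightarrow> bool list \<Rightarrow> bool" where
  "hedge n u v \<longleftrightarrow> length u = n \<and> length v = n \<and>
     card {i. i < n \<and> u ! i \<noteq> v ! i} = 1"

definition path_edges :: "bool list list \<Rightarrow> bool list set set" where
  "path_edges vs = {{vs ! i, vs ! Suc i} | i. Suc i < length vs}"

definition is_4cycle :: "nat \<Rightarrow> bool list set set \<Rightarrow> bool" where
  "is_4cycle n Z \<longleftrightarrow> (\<exists>a b c d. distinct [a, b, c, d] \<and>
     hedge n a b \<and> hedge n b c \<and> hedge n c d \<and> hedge n d a \<and>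
     Z = {{a, b}, {b, c}, {c, d}, {d, a}})"

definition flipping_cycle :: "nat \<Rightarrow> bool list set set \<Rightarrow> bool list list \<Rightarrow> bool list list \<Rightarrow> bool" where
  "flipping_cycle n Z P P' \<longleftrightarrow> set P \<inter> set P' = {} \<and> is_4cycle n Z \<and>
     card (Z \<inter> path_edges P) = 1 \<and> card (Z \<inter> path_edges P') = 1"

end

theory Submission
  imports Defs
begin

fun Vg :: "(nat \<Rightarrow> bool) \<Rightarrow> sym list \<Rightarrow> bool list" where
  "Vg g [] = []"
| "Vg g (S0 # w) = False # Vg g w"
| "Vg g (S1 # w) = True # Vg g w"
| "Vg g (SStar # w) = g 0 # Vg (\<lambda>t. g (Suc t)) w"

definition nst :: "sym list \<Rightarrow> nat" where
  "nst w = length (filter (\<lambda>x. x = SStar) w)"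

definition ins :: "nat \<Rightarrow> bool \<Rightarrow> (nat \<Rightarrow> bool) \<Rightarrow> nat \<Rightarrow> bool" where
  "ins j b g t = (if t < j then g t else if t = j then b else g (t - 1))"

lemma length_Vg[simp]: "length (Vg g w) = length w"
  by (induction g w rule: Vg.induct) auto

lemma fill_Vg: "fill i w = Vg (\<lambda>t. t < i) w"
proof (induction i w rule: fill.induct)
  case (4 i w)
  have "(\<lambda>t. Suc t < i) = (\<lambda>t. t < i - 1)" by auto
  then show ?case using 4 by simp
qed auto

lemma repl_Vg: "s \<noteq> SStar \<Longrightarrow> Vg g (repl_star j s w) = Vg (ins j (s = S1) g) w"
proof (induction j s w arbitrary: g rule: repl_star.induct)
  case (2 j s w)
  show ?case
  proof (cases "j = 0")
    case True
    have "(\<lambda>t. ins 0 (s = S1) g (Suc t)) = g" by (auto simp: ins_def)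
    then show ?thesis using True 2(2) by (cases s) (auto simp: ins_def)
  next
    case False
    have "(\<lambda>t. ins j (s = S1) g (Suc t)) = ins (j - 1) (s = S1) (\<lambda>t. g (Suc t))"
      using False by (auto simp: ins_def fun_eq_iff)
    have "Vg g (repl_star j s (SStar # w)) = g 0 # Vg (\<lambda>t. g (Suc t)) (repl_star (j-1) s w)"
      using False by simp
    also have "\<dots> = g 0 # Vg (ins (j - 1) (s = S1) (\<lambda>t. g (Suc t))) w"
      using False 2 by simp
    also have "\<dots> = Vg (ins j (s = S1) g) (SStar # w)"
      using False \<open>(\<lambda>t. ins j (s = S1) g (Suc t)) = _\<close> by (simp add: ins_def)
    finally show ?thesis .
  qed
qed auto

lemma nst_simps[simp]: "nst [] = 0" "nst (SStar # w) = Suc (nst w)" "nst (S0 # w) = nst w"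
  "nst (S1 # w) = nst w" "nst (u @ v) = nst u + nst v"
  by (auto simp: nst_def)

lemma Vg_eq_iff: "Vg g w = Vg g' w \<longleftrightarrow> (\<forall>t<nst w. g t = g' t)"
  by (induction g w arbitrary: g' rule: Vg.induct) (auto simp: All_less_Suc2)

lemma card_less_sum: "card {q::nat. q < N \<and> P q} = (\<Sum>q<N. if P q then 1 else 0)"
proof (induction N)
  case (Suc N)
  have "{q. q < Suc N \<and> P q} = {q. q < N \<and> P q} \<union> (if P N then {N} else {})"
    using less_Suc_eq by auto
  then show ?case using Suc by auto
qed simp

lemma ham: "(\<Sum>q<length w. if Vg g w ! q \<noteq> Vg g' w ! q then 1 else (0::nat))
   = (\<Sum>t<nst w. if g t \<noteq> g' t then 1 else 0)"
  by (induction g w arbitrary: g' rule: Vg.induct) (auto simp del: sum.lessThan_Suc simp: sum.lessThan_Suc_shift)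

lemma hedge_Vg: "hedge (length w) (Vg g w) (Vg g' w) \<longleftrightarrow> card {t. t < nst w \<and> g t \<noteq> g' t} = 1"
  unfolding hedge_def card_less_sum ham by simp

lemma nst_join: "nst (join_star (map (map of_bit) us)) = length us - 1"
proof (induction us)
  case (Cons u us)
  have "nst (map of_bit u) = 0" by (induction u) (auto simp: of_bit_def)
  then show ?case using Cons by (cases us) auto
qed simp

lemma path_edges_map: "path_edges (map f [0..<Suc N]) = {{f i, f (Suc i)} | i. i < N}"
  unfolding path_edges_def
  apply (auto simp del: upt_Suc)
  subgoal for i by (rule exI[of _ i]) (auto simp del: upt_Suc)
  done

lemma path_edges_sub: "E \<in> path_edges P \<Longrightarrow> E \<subseteq> set P"
  unfolding path_edges_def by auto

lemma hedge_irrefl: "\<not> hedge n u u"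
  unfolding hedge_def by simp

lemma cyc_lemma:
  assumes disj: "set P \<inter> set P' = {}" and ab: "{a,b} \<in> path_edges P" and cd: "{c,d} \<in> path_edges P'"
    and h1: "hedge n a b" and h2: "hedge n b c" and h3: "hedge n c d" and h4: "hedge n d a"
  shows "flipping_cycle n {{a,b},{b,c},{c,d},{d,a}} P P'"
proof -
  have aP: "a \<in> set P" "b \<in> set P" using path_edges_sub[OF ab] by auto
  have cP: "c \<in> set P'" "d \<in> set P'" using path_edges_sub[OF cd] by auto
  have ne: "a \<noteq> c" "b \<noteq> d" "c \<notin> set P" "d \<notin> set P" "a \<notin> set P'" "b \<notin> set P'"
    using aP cP disj by auto
  have ne2: "a \<noteq> b" "b \<noteq> c" "c \<noteq> d" "d \<noteq> a" using h1 h2 h3 h4 hedge_irrefl by metis+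
  have "is_4cycle n {{a,b},{b,c},{c,d},{d,a}}"
    unfolding is_4cycle_def
    by (rule exI[of _ a], rule exI[of _ b], rule exI[of _ c], rule exI[of _ d])
       (use ne ne2 h1 h2 h3 h4 in auto)
  moreover have "{{a,b},{b,c},{c,d},{d,a}} \<inter> path_edges P = {{a,b}}"
    using ab path_edges_sub[of _ P] ne by auto
  moreover have "{{a,b},{b,c},{c,d},{d,a}} \<inter> path_edges P' = {{c,d}}"
    using cd path_edges_sub[of _ P'] ne by auto
  ultimately show ?thesis unfolding flipping_cycle_def using disj by simp
qed

definition eh :: "nat \<Rightarrow> nat \<Rightarrow> nat \<Rightarrow> nat" where
  "eh h m k = (if m = 0 then (if k+4 \<le> h then k+2 else if k+3 = h then h-1 else 1)
     else if m = h-1 then (if k=0 then h-3 else if k = 1 then h-2 else k-2)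
     else (if k+m+1 < h then k+m+1 else k+m+1-h))"

lemma eh_props: "5 \<le> h \<Longrightarrow> m < h \<Longrightarrow> k + 1 < h \<Longrightarrow>
   eh h m k < h \<and> eh h m k \<noteq> k \<and> eh h m k \<noteq> Suc k \<and> eh h m k \<noteq> m"
  unfolding eh_def by auto

lemma eh_inj: "5 \<le> h \<Longrightarrow> m < h \<Longrightarrow> k + 1 < h \<Longrightarrow> k' + 1 < h \<Longrightarrow> eh h m k = eh h m k' \<Longrightarrow> k = k'"
  unfolding eh_def by (auto split: if_splits)

definition X :: "nat \<Rightarrow> nat \<Rightarrow> bool" where "X i = (\<lambda>t. t < i)"
definition Y :: "nat \<Rightarrow> nat \<Rightarrow> nat \<Rightarrow> bool" where
  "Y k j = (\<lambda>t. if t < k then t < j else if t = k then False else if t = Suc k then True else t - 2 < j)"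

lemma fill_child: "fill j (child k w) = Vg (Y k j) w"
proof -
  have "fill j (child k w) = Vg (ins (Suc k) True (ins k False (\<lambda>t. t < j))) w"
    unfolding child_def fill_Vg by (simp add: repl_Vg)
  also have "ins (Suc k) True (ins k False (\<lambda>t. t < j)) = Y k j"
    by (auto simp: ins_def Y_def fun_eq_iff)
  finally show ?thesis .
qed

lemma XY_ne: "Suc k < h \<Longrightarrow> \<not> (\<forall>t<h. X i t = Y k j t)"
  unfolding X_def Y_def
  by (metis Suc_lessD lessI less_irrefl_nat order.strict_trans)

lemma YY_ne: "k < k' \<Longrightarrow> Suc k' < h \<Longrightarrow> \<not> (\<forall>t<h. Y k j t = Y k' j' t)"
proof
  assume a: "k < k'" "Suc k' < h" and b: "\<forall>t<h. Y k j t = Y k' j' t"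
  have "Y k j k' = Y k' j' k'" "Y k j (Suc k') = Y k' j' (Suc k')" using b a by auto
  then have 1: "Y k j k' = False" "Y k j (Suc k') = True" by (auto simp: Y_def)
  show False
  proof (cases "k' = Suc k")
    case True then show ?thesis using 1 by (simp add: Y_def)
  next
    case False then show ?thesis using 1 a by (auto simp: Y_def split: if_splits)
  qed
qed

lemma XX_ne: "i < i' \<Longrightarrow> i < h \<Longrightarrow> \<not> (\<forall>t<h. X i t = X i' t)"
  unfolding X_def by auto

lemma card1: "S = {x} \<Longrightarrow> card S = 1" by simp

lemma d1: "e < h \<Longrightarrow> {t. t < h \<and> X e t \<noteq> X (Suc e) t} = {e}"
  unfolding X_def by auto
lemma d2: "e < k \<Longrightarrow> Suc k < h \<Longrightarrow> {t. t < h \<and> X (Suc e) t \<noteq> Y k (Suc e) t} = {Suc k}"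
  unfolding X_def Y_def by auto
lemma d3: "e < k \<Longrightarrow> Suc k < h \<Longrightarrow> {t. t < h \<and> Y k (Suc e) t \<noteq> Y k e t} = {e}"
  unfolding Y_def by auto
lemma d4: "e < k \<Longrightarrow> Suc k < h \<Longrightarrow> {t. t < h \<and> Y k e t \<noteq> X e t} = {Suc k}"
  unfolding X_def Y_def by auto
lemma d5: "k + 2 \<le> e \<Longrightarrow> e < h \<Longrightarrow> {t. t < h \<and> X (Suc e) t \<noteq> Y k (Suc (e-2)) t} = {k}"
  unfolding X_def Y_def by auto
lemma d6: "k + 2 \<le> e \<Longrightarrow> e < h \<Longrightarrow> {t. t < h \<and> Y k (Suc (e-2)) t \<noteq> Y k (e-2) t} = {e}"
  unfolding Y_def by auto
lemma d7: "k + 2 \<le> e \<Longrightarrow> e < h \<Longrightarrow> {t. t < h \<and> Y k (e-2) t \<noteq> X e t} = {k}"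
  unfolding X_def Y_def by auto

theorem lemma13:
  fixes n h :: nat and w :: "sym list" and f :: "bool list set"
  assumes "is_gk_chain n h w" and "h \<ge> 5"
    and "f \<in> path_edges (chain_path h w)"
  shows "\<exists>cyc :: nat \<Rightarrow> bool list set set.
           (\<forall>k < h - 1. flipping_cycle n (cyc k) (chain_path h w) (chain_path (h - 2) (child k w))
                        \<and> f \<notin> cyc k) \<and>
           (\<forall>k < h - 1. \<forall>k' < h - 1. k \<noteq> k' \<longrightarrow> cyc k \<inter> cyc k' = {})"
proof -
  have len: "length w = n" and ns: "nst w = h"
    using assms(1) nst_join unfolding is_gk_chain_def by auto
  define V where "V g = Vg g w" for g
  have Veq: "V g = V g' \<longleftrightarrow> (\<forall>t<h. g t = g' t)" for g g'
    unfolding V_def Vg_eq_iff ns ..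
  have Vhe: "hedge n (V g) (V g') \<longleftrightarrow> card {t. t < h \<and> g t \<noteq> g' t} = 1" for g g'
    unfolding V_def using hedge_Vg[of w g g'] len ns by simp
  define P where "P = chain_path h w"
  define P' where "P' k = chain_path (h - 2) (child k w)" for k
  have Pm: "P = map (\<lambda>i. V (X i)) [0..<Suc h]"
    unfolding P_def chain_path_def V_def fill_Vg X_def by simp
  have hh: "h - 2 + 1 = Suc (h - 2)" by simp
  have P'm: "P' k = map (\<lambda>j. V (Y k j)) [0..<Suc (h-2)]" for k
    unfolding P'_def chain_path_def V_def fill_child hh ..
  have PE: "path_edges P = {{V (X i), V (X (Suc i))} | i. i < h}"
    unfolding Pm path_edges_map ..
  have PE': "path_edges (P' k) = {{V (Y k j), V (Y k (Suc j))} | j. j < h - 2}" for k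
    unfolding P'm path_edges_map ..
  have sP: "set P = {V (X i) | i. i \<le> h}" unfolding Pm by (auto simp del: upt_Suc simp: less_Suc_eq_le)
  have sP': "set (P' k) = {V (Y k j) | j. j \<le> h - 2}" for k unfolding P'm by (auto simp del: upt_Suc simp: less_Suc_eq_le)
  have disj: "set P \<inter> set (P' k) = {}" if "k < h - 1" for k
  proof -
    have "V (X i) \<noteq> V (Y k j)" for i j using XY_ne[of k h i j] that unfolding Veq by auto
    then show ?thesis unfolding sP sP' by auto
  qed
  have disj': "set (P' k) \<inter> set (P' k') = {}" if "k < h - 1" "k' < h - 1" "k \<noteq> k'" for k k'
  proof -
    have "V (Y k j) \<noteq> V (Y k' j')" for j j'
    proof (cases "k < k'")
      case True then show ?thesis using YY_ne[of k k' h j j'] that unfolding Veq by auto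
    next
      case False
      have "\<not> (\<forall>t<h. Y k' j' t = Y k j t)" using YY_ne[of k' k h j' j] False that by auto
      then show ?thesis unfolding Veq by metis
    qed
    then show ?thesis unfolding sP' by auto
  qed
  have Xinj: "V (X i) = V (X i') \<Longrightarrow> i \<le> h \<Longrightarrow> i' \<le> h \<Longrightarrow> i = i'" for i i'
    using XX_ne[of i i' h] XX_ne[of i' i h] unfolding Veq by (metis le_neq_implies_less linorder_neqE_nat order.strict_trans2)
  obtain m where m: "m < h" "f = {V (X m), V (X (Suc m))}"
    using assms(3) unfolding P_def[symmetric] PE by auto
  define E where "E k = eh h m k" for k
  define J where "J k = (if E k < k then E k else E k - 2)" for k
  define A where "A k = V (X (E k))" for k
  define B where "B k = V (X (Suc (E k)))" for k
  define C where "C k = V (Y k (Suc (J k)))" for k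
  define D where "D k = V (Y k (J k))" for k
  define cyc where "cyc k = {{A k, B k}, {B k, C k}, {C k, D k}, {D k, A k}}" for k
  have Eprops: "E k < h \<and> E k \<noteq> k \<and> E k \<noteq> Suc k \<and> E k \<noteq> m" if "k < h - 1" for k
    unfolding E_def using eh_props[of h m k] that assms(2) m(1) by auto
  have ABP: "{A k, B k} \<subseteq> set P" if "k < h - 1" for k
    using Eprops[OF that] unfolding A_def B_def sP by auto
  have CDP: "C k \<in> set (P' k) \<and> D k \<in> set (P' k)" if "k < h - 1" for k
  proof -
    have "Suc (J k) \<le> h - 2" using Eprops[OF that] that unfolding J_def by auto
    then show ?thesis unfolding C_def D_def sP' by auto
  qed
  have twoset: "{V (X i), V (X (Suc i))} = {V (X i'), V (X (Suc i'))} \<Longrightarrow> i < h \<Longrightarrow> i' < h \<Longrightarrow> i = i'" for i i'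
    by (auto simp: doubleton_eq_iff dest!: Xinj)
  have flip: "flipping_cycle n (cyc k) P (P' k)" if k: "k < h - 1" for k
  proof -
    have ab: "{A k, B k} \<in> path_edges P" using Eprops[OF k] unfolding PE A_def B_def by auto
    have "J k < h - 2" using Eprops[OF that] that unfolding J_def by auto
    then have cd: "{C k, D k} \<in> path_edges (P' k)" unfolding PE' C_def D_def by (auto simp: insert_commute)
    have hs: "hedge n (A k) (B k) \<and> hedge n (B k) (C k) \<and> hedge n (C k) (D k) \<and> hedge n (D k) (A k)"
    proof (cases "E k < k")
      case True
      then have "J k = E k" unfolding J_def by simp
      moreover have "Suc k < h" using k by simp
      ultimately show ?thesis unfolding A_def B_def C_def D_def Vhe using True Eprops[OF k]
        card1[OF d1[of "E k" h]] card1[OF d2[of "E k" k h]] card1[OF d3[of "E k" k h]] card1[OF d4[of "E k" k h]]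
        by simp
    next
      case False
      then have "J k = E k - 2" "k + 2 \<le> E k" unfolding J_def using Eprops[OF k] by auto
      then show ?thesis unfolding A_def B_def C_def D_def Vhe using Eprops[OF k]
        card1[OF d1[of "E k" h]] card1[OF d5[of k "E k" h]] card1[OF d6[of k "E k" h]] card1[OF d7[of k "E k" h]]
        by simp
    qed
    show ?thesis unfolding cyc_def using cyc_lemma[OF disj[OF k] ab cd] hs by blast
  qed
  have fnot: "f \<notin> cyc k" if k: "k < h - 1" for k
  proof
    assume "f \<in> cyc k"
    moreover have "f \<subseteq> set P" using m unfolding sP by auto
    moreover have "C k \<notin> set P" "D k \<notin> set P" using CDP[OF k] disj[OF k] by auto
    moreover have "f \<noteq> {A k, B k}"
      using twoset[of m "E k"] m Eprops[OF k] unfolding A_def B_def by auto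
    ultimately show False unfolding cyc_def by auto
  qed
  have cdisj: "cyc k \<inter> cyc k' = {}" if k: "k < h - 1" "k' < h - 1" "k \<noteq> k'" for k k'
  proof -
    have "{A k, B k} \<noteq> {A k', B k'}"
    proof
      assume "{A k, B k} = {A k', B k'}"
      then have "E k = E k'" using twoset[of "E k" "E k'"] Eprops k unfolding A_def B_def by auto
      then show False using eh_inj[of h m k k'] k assms(2) m(1) unfolding E_def by fastforce
    qed
    moreover have "C k \<notin> set P" "D k \<notin> set P" "C k' \<notin> set P" "D k' \<notin> set P"
      using CDP k disj by blast+
    moreover have "C k \<notin> set (P' k')" "D k \<notin> set (P' k')"
      using CDP[OF k(1)] disj'[OF k] by auto
    moreover have "C k' \<notin> set (P' k)" "D k' \<notin> set (P' k)"
      using CDP[OF k(2)] disj'[OF k] by auto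
    moreover have "A k \<notin> set (P' k')" "B k \<notin> set (P' k')" "A k' \<notin> set (P' k)" "B k' \<notin> set (P' k)"
      using ABP[OF k(1)] ABP[OF k(2)] disj k by blast+
    moreover note CDP[OF k(1)] CDP[OF k(2)]
    ultimately show ?thesis unfolding cyc_def by (auto simp: doubleton_eq_iff)
  qed
  show ?thesis
    by (rule exI[of _ cyc]) (use flip fnot cdisj in \<open>auto simp: P_def P'_def\<close>)
qed

end
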